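(* Let $S\ge 2$, $T\ge 3$, $\mathcal S=\{1,\dots,S\}$, and let $\mathbf x,\mathbf y$ be two contingency tables on $\mathcal S^T$ lying in the same fiber of the toric homogeneous Markov chain (THMC) model, and put $z^t_{ij}=x^t_{ij}-y^t_{ij}$. Suppose that for some times $1\le t<t'\le T$ and states $s_t,s_{t+1},\dots,s_{t'}\in\mathcal S$ we have $z^{u}_{s_u s_{u+1}}>0$ for all $u=t,\dots,t'-1$ (i.e. $\mathbf x$ dominates $\mathbf y$ in the partial path $t\!:\!s_t s_{t+1}\cdots s_{t'}$). Then, by applying to $\mathbf x$ a finite sequence of crossing path swappings (each step producing again a table with nonnegative entries), one can transform $\mathbf x$ into a table $\tilde{\mathbf x}$ such that $\tilde{\mathbf x}$ contains (with positive frequency) a path $\omega=(\omega_1,\dots,\omega_T)$ with $\omega_u=s_u$ for all $u=t,\dots,t'$.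
   Context: A path is $\omega=(\omega_1,\dots,\omega_T)\in\mathcal S^T$. A contingency table is a function $\mathbf x:\mathcal S^T\to\mathbb Z_{\ge0}$ (a multiset of $N=\sum_\omega x(\omega)$ paths). For $1\le t\le T-1$ and $i,j\in\mathcal S$, $x^t_{ij}$ is the number of paths (with multiplicity) in $\mathbf x$ with $\omega_t=i,\omega_{t+1}=j$; $x^1_i$ is the number of paths with $\omega_1=i$; $x^+_{ij}=\sum_{t=1}^{T-1}x^t_{ij}$. The sufficient statistic of the THMC model is $\mathbf b(\mathbf x)=(\{x^1_i\}_{i\in\mathcal S},\{x^+_{ij}\}_{i,j\in\mathcal S})$, and the fiber of $\mathbf b$ is the set of all tables $\mathbf x$ with $\mathbf b(\mathbf x)=\mathbf b$. Crossing path swapping: if two paths $\omega=(s_1,\dots,s_T)$ and $\omega'=(s'_1,\dots,s'_T)$ satisfy $s_t=s'_t$ for some $t$, replacing them in the table by $\tilde\omega=(s_1,\dots,s_t,s'_{t+1},\dots,s'_T)$ and $\tilde\omega'=(s'_1,\dots,s'_t,s_{t+1},\dots,s_T)$; equivalently adding the move $e_{\tilde\omega}+e_{\tilde\omega'}-e_\omega-e_{\omega'}$ to a table containing $\omega$ and $\omega'$ (here $e_\omega$ is the indicator table of the single path $\omega$). *)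

theory Defs
  imports Main
begin

text \<open>A path of length T is a list w of length T with
  entries in {1..S}; the paper's omega_t is w ! (t - 1) (times are 1-based).\<close>

definition paths :: "nat \<Rightarrow> nat \<Rightarrow> nat list set" where
  "paths S T = {w. length w = T \<and> set w \<subseteq> {1..S}}"

definition is_table :: "nat \<Rightarrow> nat \<Rightarrow> (nat list \<Rightarrow> nat) \<Rightarrow> bool" where
  "is_table S T x \<longleftrightarrow> (\<forall>w. x w \<noteq> 0 \<longrightarrow> w \<in> paths S T)"

definition trans_count :: "nat \<Rightarrow> nat \<Rightarrow> (nat list \<Rightarrow> nat) \<Rightarrow> nat \<Rightarrow> nat \<Rightarrow> nat \<Rightarrow> nat" where
  "trans_count S T x t i j =
     (\<Sum>w\<in>{w\<in>paths S T. w ! (t - 1) = i \<and> w ! t = j}. x w)"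

definition init_count :: "nat \<Rightarrow> nat \<Rightarrow> (nat list \<Rightarrow> nat) \<Rightarrow> nat \<Rightarrow> nat" where
  "init_count S T x i = (\<Sum>w\<in>{w\<in>paths S T. w ! 0 = i}. x w)"

definition plus_count :: "nat \<Rightarrow> nat \<Rightarrow> (nat list \<Rightarrow> nat) \<Rightarrow> nat \<Rightarrow> nat \<Rightarrow> nat" where
  "plus_count S T x i j = (\<Sum>t=1..T-1. trans_count S T x t i j)"

definition same_fiber :: "nat \<Rightarrow> nat \<Rightarrow> (nat list \<Rightarrow> nat) \<Rightarrow> (nat list \<Rightarrow> nat) \<Rightarrow> bool" where
  "same_fiber S T x y \<longleftrightarrow>
     (\<forall>i\<in>{1..S}. init_count S T x i = init_count S T y i) \<and>
     (\<forall>i\<in>{1..S}. \<forall>j\<in>{1..S}. plus_count S T x i j = plus_count S T y i j)"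

definition ind :: "nat list \<Rightarrow> nat list \<Rightarrow> int" where
  "ind w v = (if v = w then 1 else 0)"

definition swap_step :: "nat \<Rightarrow> nat \<Rightarrow> (nat list \<Rightarrow> nat) \<Rightarrow> (nat list \<Rightarrow> nat) \<Rightarrow> bool" where
  "swap_step S T x x' \<longleftrightarrow>
     (\<exists>w w' u. w \<in> paths S T \<and> w' \<in> paths S T \<and> 1 \<le> u \<and> u \<le> T \<and>
        w ! (u - 1) = w' ! (u - 1) \<and>
        (\<forall>v. int (x v) - ind w v - ind w' v \<ge> 0) \<and>
        (\<forall>v. int (x' v) = int (x v) + ind (take u w @ drop u w') v
                         + ind (take u w' @ drop u w) v - ind w v - ind w' v))"

end

theory Submission
  imports Defs
begin

lemma finite_paths: "finite (paths S T)"
proof -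
  have "paths S T = {xs. set xs \<subseteq> {1..S} \<and> length xs = T}" by (auto simp: paths_def)
  thus ?thesis using finite_lists_length_eq[of "{1..S}" T] by simp
qed

lemma sum_ind: "finite A \<Longrightarrow> (\<Sum>v\<in>A. ind w v) = (if w \<in> A then 1 else 0)"
  unfolding ind_def by (simp add: sum.delta')

lemma nth_splice:
  assumes "u \<le> length w" "u \<le> length w'"
  shows "(take u w @ drop u w') ! p = (if p < u then w ! p else w' ! p)"
  using assms by (simp add: nth_append)

lemma splice_path:
  assumes "w \<in> paths S T" "w' \<in> paths S T" "u \<le> T"
  shows "take u w @ drop u w' \<in> paths S T"
  using assms unfolding paths_def
  by (auto dest: in_set_takeD in_set_dropD)

lemma swap_trans:
  assumes "swap_step S T x x'"
  shows "trans_count S T x' tt i j = trans_count S T x tt i j"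
proof -
  obtain w w' u where w: "w \<in> paths S T" and w': "w' \<in> paths S T" and u: "1 \<le> u" "u \<le> T"
    and c: "w ! (u - 1) = w' ! (u - 1)"
    and eq: "\<forall>v. int (x' v) = int (x v) + ind (take u w @ drop u w') v
                         + ind (take u w' @ drop u w) v - ind w v - ind w' v"
    using assms unfolding swap_step_def by blast
  define A where "A = {v\<in>paths S T. v!(tt-1)=i \<and> v!tt = j}"
  define nw where "nw = take u w @ drop u w'"
  define ow where "ow = take u w' @ drop u w"
  have fin: "finite A" unfolding A_def using finite_paths by simp
  have lw: "length w = T" "length w' = T" using w w' by (auto simp: paths_def)
  have nwp: "nw \<in> paths S T" unfolding nw_def using splice_path w w' u by blast
  have owp: "ow \<in> paths S T" unfolding ow_def using splice_path w w' u by blast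
  have nwn: "\<And>p. nw ! p = (if p < u then w ! p else w' ! p)"
    unfolding nw_def using nth_splice[of u w w'] lw u by simp
  have own: "\<And>p. ow ! p = (if p < u then w' ! p else w ! p)"
    unfolding ow_def using nth_splice[of u w' w] lw u by simp
  have key: "(if nw\<in>A then 1 else 0) + (if ow\<in>A then 1 else 0)
      = (if w\<in>A then 1 else 0) + (if w'\<in>A then (1::int) else 0)"
  proof -
    have mem: "\<And>v. v \<in> paths S T \<Longrightarrow> (v \<in> A) = (v!(tt-1)=i \<and> v!tt = j)"
      unfolding A_def by simp
    consider "tt < u" | "tt = u" | "tt > u" by linarith
    thus ?thesis
    proof cases
      case 1
      hence h: "nw!(tt-1) = w!(tt-1)" "nw!tt = w!tt" "ow!(tt-1) = w'!(tt-1)" "ow!tt = w'!tt"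
        using nwn own by auto
      show ?thesis unfolding mem[OF nwp] mem[OF owp] mem[OF w] mem[OF w'] h by simp
    next
      case 2
      hence h: "nw!(tt-1) = w!(tt-1)" "nw!tt = w'!tt" "ow!(tt-1) = w'!(tt-1)" "ow!tt = w!tt"
        using nwn own u by auto
      show ?thesis unfolding mem[OF nwp] mem[OF owp] mem[OF w] mem[OF w'] h using c 2 by simp
    next
      case 3
      hence h: "nw!(tt-1) = w'!(tt-1)" "nw!tt = w'!tt" "ow!(tt-1) = w!(tt-1)" "ow!tt = w!tt"
        using nwn own by auto
      show ?thesis unfolding mem[OF nwp] mem[OF owp] mem[OF w] mem[OF w'] h by simp
    qed
  qed
  have "int (trans_count S T x' tt i j) = (\<Sum>v\<in>A. int (x' v))"
    unfolding trans_count_def A_def by simp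
  also have "\<dots> = (\<Sum>v\<in>A. int (x v) + ind nw v + ind ow v - ind w v - ind w' v)"
    using eq unfolding nw_def ow_def by simp
  also have "\<dots> = (\<Sum>v\<in>A. int (x v)) + (\<Sum>v\<in>A. ind nw v) + (\<Sum>v\<in>A. ind ow v)
        - (\<Sum>v\<in>A. ind w v) - (\<Sum>v\<in>A. ind w' v)"
    by (simp add: sum.distrib sum_subtractf)
  also have "\<dots> = (\<Sum>v\<in>A. int (x v))" using key by (simp add: sum_ind[OF fin])
  also have "\<dots> = int (trans_count S T x tt i j)"
    unfolding trans_count_def A_def by simp
  finally show ?thesis by simp
qed

lemma rtr_trans:
  assumes "(swap_step S T)\<^sup>*\<^sup>* x x'"
  shows "trans_count S T x' tt i j = trans_count S T x tt i j"
  using assms by (induction rule: rtranclp_induct) (auto simp: swap_trans)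

lemma trans_pos_ex:
  assumes "trans_count S T x u i j > 0"
  shows "\<exists>w\<in>paths S T. x w > 0 \<and> w!(u-1)=i \<and> w!u = j"
proof (rule ccontr)
  assume "\<not> ?thesis"
  hence "trans_count S T x u i j = 0" unfolding trans_count_def
    by (intro sum.neutral) auto
  thus False using assms by simp
qed

theorem lemma2:
  fixes S T :: nat and x y :: "nat list \<Rightarrow> nat" and t t' :: nat and s :: "nat \<Rightarrow> nat"
  assumes "S \<ge> 2" and "T \<ge> 3"
    and "is_table S T x" and "is_table S T y"
    and "same_fiber S T x y"
    and "1 \<le> t" and "t < t'" and "t' \<le> T"
    and "\<forall>u\<in>{t..t'}. s u \<in> {1..S}"
    and "\<forall>u\<in>{t..<t'}. int (trans_count S T x u (s u) (s (u + 1)))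
                        - int (trans_count S T y u (s u) (s (u + 1))) > 0"
  shows "\<exists>x' w. (swap_step S T)\<^sup>*\<^sup>* x x' \<and> w \<in> paths S T \<and> x' w > 0 \<and>
                (\<forall>u\<in>{t..t'}. w ! (u - 1) = s u)"
proof -
  have pos: "\<And>u. u \<in> {t..<t'} \<Longrightarrow> trans_count S T x u (s u) (s (u + 1)) > 0"
    using assms(10) by fastforce
  have main: "\<And>n. t + 1 + n \<le> t' \<Longrightarrow> \<exists>x' w. (swap_step S T)\<^sup>*\<^sup>* x x' \<and> w \<in> paths S T \<and> x' w > 0 \<and>
                (\<forall>u\<in>{t..t+1+n}. w ! (u - 1) = s u)"
  proof -
    fix n show "t + 1 + n \<le> t' \<Longrightarrow> \<exists>x' w. (swap_step S T)\<^sup>*\<^sup>* x x' \<and> w \<in> paths S T \<and> x' w > 0 \<and>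
                (\<forall>u\<in>{t..t+1+n}. w ! (u - 1) = s u)"
    proof (induction n)
      case 0
      have "t \<in> {t..<t'}" using assms by simp
      from trans_pos_ex[OF pos[OF this]] obtain w where
        "w \<in> paths S T" "x w > 0" "w!(t-1) = s t" "w!t = s (t+1)" by blast
      moreover have "\<forall>u\<in>{t..t+1+0}. w ! (u - 1) = s u"
      proof
        fix u assume "u \<in> {t..t+1+0}"
        hence "u = t \<or> u = t + 1" by auto
        thus "w ! (u - 1) = s u" using calculation by auto
      qed
      ultimately show ?case by blast
    next
      case (Suc n)
      define k where "k = t + 1 + n"
      obtain x' w where r: "(swap_step S T)\<^sup>*\<^sup>* x x'" and w: "w \<in> paths S T" and xw: "x' w > 0"
        and m: "\<forall>u\<in>{t..k}. w ! (u - 1) = s u"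
        using Suc unfolding k_def by auto
      have kr: "k \<in> {t..<t'}" using Suc.prems unfolding k_def by simp
      have "trans_count S T x' k (s k) (s (k + 1)) > 0"
        using pos[OF kr] rtr_trans[OF r] by simp
      from trans_pos_ex[OF this] obtain w' where w': "w' \<in> paths S T" "x' w' > 0"
        "w'!(k-1) = s k" "w'!k = s (k+1)" by blast
      have goal_eq: "{t..t + 1 + Suc n} = insert (k+1) {t..k}" unfolding k_def by auto
      show ?case
      proof (cases "w ! k = s (k+1)")
        case True
        have "\<forall>u\<in>{t..t + 1 + Suc n}. w ! (u - 1) = s u" using m True goal_eq by auto
        thus ?thesis using r w xw by blast
      next
        case False
        have neq: "w \<noteq> w'" using False w' by auto
        have kT: "1 \<le> k" "k \<le> T" using kr assms by auto
        have c: "w ! (k - 1) = w' ! (k - 1)" using m w' kr by auto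
        define nw where "nw = take k w @ drop k w'"
        define ow where "ow = take k w' @ drop k w"
        define e where "e = (\<lambda>v. int (x' v) + ind nw v + ind ow v - ind w v - ind w' v)"
        define x'' where "x'' = (\<lambda>v. nat (e v))"
        have nn: "\<forall>v. int (x' v) - ind w v - ind w' v \<ge> 0"
          using neq xw w'(2) by (auto simp: ind_def)
        have ip: "\<And>a v. ind a v \<ge> 0" by (simp add: ind_def)
        have epos: "\<And>v. e v \<ge> 0" unfolding e_def using nn ip
          by (smt (verit))
        have ex: "\<And>v. int (x'' v) = e v" unfolding x''_def using epos by simp
        have st: "swap_step S T x' x''"
          unfolding swap_step_def
          apply (rule exI[of _ w], rule exI[of _ w'], rule exI[of _ k])
          using w w'(1) kT c nn ex unfolding e_def nw_def ow_def by auto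
        have lw: "length w = T" "length w' = T" using w w' by (auto simp: paths_def)
        have nwp: "nw \<in> paths S T" unfolding nw_def using splice_path w w'(1) kT by blast
        have nwn: "\<And>p. nw ! p = (if p < k then w ! p else w' ! p)"
          unfolding nw_def using nth_splice[of k w w'] lw kT by simp
        have "nw \<noteq> w" using nwn[of k] False w' by auto
        hence "e nw \<ge> 1" using xw w'(2) unfolding e_def ind_def by auto
        hence pos2: "x'' nw > 0" using ex[of nw] by simp
        have "\<forall>u\<in>{t..t + 1 + Suc n}. nw ! (u - 1) = s u"
        proof
          fix u assume "u \<in> {t..t + 1 + Suc n}"
          hence "u = k + 1 \<or> u \<in> {t..k}" using goal_eq by auto
          thus "nw ! (u - 1) = s u"
          proof
            assume "u = k+1" thus ?thesis using nwn w' by simp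
          next
            assume "u \<in> {t..k}" thus ?thesis using nwn m kT assms(6) by auto
          qed
        qed
        moreover have "(swap_step S T)\<^sup>*\<^sup>* x x''" using r st by simp
        ultimately show ?thesis using nwp pos2 by blast
      qed
    qed
  qed
  obtain n where "t' = t + 1 + n" using assms(7) by (metis less_imp_Suc_add add.commute Suc_eq_plus1 add.assoc)
  thus ?thesis using main[of n] by auto
qed

end
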